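(* Let $H\in\mathbb{R}^{n\times n}$ be Hurwitz, and consider the stable LTI (reference) system $\dot x(t)=Hx(t)$, sampled with time step $h>0$, so that the reference trajectory satisfies $x_{ref}(n+1\,|\,k)=e^{Hh}x_{ref}(n\,|\,k)$, with $x_{ref}(0\,|\,k)$ the reference state at time $k$ (hence $x_{ref}(0\,|\,k+1)=x_{ref}(1\,|\,k)$). Consider the quantized system $x_q(k+1)=A_qx_q(k)+hB_qu(k)$, $x_q\in\mathbb{R}^n$, $B_q\in\mathbb{R}^{n\times m}$, $u(k)\in\{-1,0,1\}^m$, controlled by the QS-MPC law: at each time $k$, solve $$\min_{u_{0|k},\dots,u_{N-1|k}} J(x_q(k),U(k))=|x_{N|k}-x_{ref}(N|k)|_P^2+\sum_{n=0}^{N-1}\Big(|x_{n|k}-x_{ref}(n|k)|_Q^2+|u_{n|k}|_R^2\Big)$$ subject to $u_{n|k}\in\{-1,0,1\}^m$, $x_{0|k}=x_q(k)$, $x_{n+1|k}=A_qx_{n|k}+hB_qu_{n|k}$, $x_{ref}(n+1|k)=e^{Hh}x_{ref}(n|k)$ for $n=0,\dots,N-1$, and apply $u(k)=u^*_{0|k}$, the first element of an optimal sequence $U^*(k)$. Here $P,Q,R$ are symmetric positive definite, $N\ge 1$ is the prediction horizon, and $|x|_P^2=x^TPx$. If (a) $A_q=e^{Hh}$, and (b) the symmetric positive definite matrices $P,Q$ satisfy $Q-P+A_q^TPA_q\prec 0$, then the QS-MPC closed-loop solution is asymptotically stable (the quantized system asymptotically emulates the LTI system and converges to its equilibrium).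
   Context: QS-MPC denotes the model predictive control scheme for the quantized system described in the claim, used to emulate the continuous-time LTI system $\dot x=Hx$ (obtained from $\dot x=Ax+Bu$ with stabilizing feedback $u=Kx$, $H=A+BK$). $\prec 0$ means negative definite. The equilibrium of the LTI system is the origin. *)

theory Defs
  imports "HOL-Analysis.Analysis"
begin

(* Matrix powers and the matrix exponential e^A = sum_k A^k / k! for square real matrices.
   (The componentwise product on vec is not matrix multiplication, so the generic exp is
   not the matrix exponential; we define it via the matrix product **.) *)
primrec mpow :: "real^'n^'n \<Rightarrow> nat \<Rightarrow> real^'n^'n" where
  "mpow A 0 = mat 1"
| "mpow A (Suc k) = A ** mpow A k"

definition mexp :: "real^'n^'n \<Rightarrow> real^'n^'n" where
  "mexp A = (\<Sum>k. (1 / fact k) *\<^sub>R mpow A k)"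

definition cmat :: "real^'n^'m \<Rightarrow> complex^'n^'m" where
  "cmat A = (\<chi> i j. complex_of_real (A $ i $ j))"

definition hurwitz :: "real^'n^'n \<Rightarrow> bool" where
  "hurwitz H \<longleftrightarrow> (\<forall>(c::complex) (v::complex^'n). v \<noteq> 0 \<and> cmat H *v v = c *s v \<longrightarrow> Re c < 0)"

definition sym_pos_def :: "real^'n^'n \<Rightarrow> bool" where
  "sym_pos_def P \<longleftrightarrow> transpose P = P \<and> (\<forall>x. x \<noteq> 0 \<longrightarrow> x \<bullet> (P *v x) > 0)"

definition neg_def :: "real^'n^'n \<Rightarrow> bool" where
  "neg_def M \<longleftrightarrow> transpose M = M \<and> (\<forall>x. x \<noteq> 0 \<longrightarrow> x \<bullet> (M *v x) < 0)"

definition wnorm2 :: "real^'n^'n \<Rightarrow> real^'n \<Rightarrow> real" where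
  "wnorm2 P x = x \<bullet> (P *v x)"

definition qinputs :: "(real^'m) set" where
  "qinputs = {u. \<forall>i. u $ i \<in> {-1, 0, 1}}"

primrec xpred :: "real^'n^'n \<Rightarrow> real^'m^'n \<Rightarrow> real \<Rightarrow> real^'n \<Rightarrow> (nat \<Rightarrow> real^'m) \<Rightarrow> nat \<Rightarrow> real^'n" where
  "xpred Aq Bq h x U 0 = x"
| "xpred Aq Bq h x U (Suc n) = Aq *v xpred Aq Bq h x U n + h *\<^sub>R (Bq *v U n)"

definition xrefpred :: "real^'n^'n \<Rightarrow> real \<Rightarrow> real^'n \<Rightarrow> nat \<Rightarrow> real^'n" where
  "xrefpred H h r n = mpow (mexp (h *\<^sub>R H)) n *v r"

definition mpc_cost ::
  "real^'n^'n \<Rightarrow> real^'m^'n \<Rightarrow> real^'n^'n \<Rightarrow> real \<Rightarrow> real^'n^'n \<Rightarrow> real^'n^'n \<Rightarrow> real^'m^'m \<Rightarrow> nat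
   \<Rightarrow> real^'n \<Rightarrow> real^'n \<Rightarrow> (nat \<Rightarrow> real^'m) \<Rightarrow> real" where
  "mpc_cost Aq Bq H h P Q R N x r U =
     wnorm2 P (xpred Aq Bq h x U N - xrefpred H h r N)
     + (\<Sum>n<N. wnorm2 Q (xpred Aq Bq h x U n - xrefpred H h r n) + wnorm2 R (U n))"

definition admissible :: "nat \<Rightarrow> (nat \<Rightarrow> real^'m) \<Rightarrow> bool" where
  "admissible N U \<longleftrightarrow> (\<forall>n<N. U n \<in> qinputs)"

definition mpc_optimal ::
  "real^'n^'n \<Rightarrow> real^'m^'n \<Rightarrow> real^'n^'n \<Rightarrow> real \<Rightarrow> real^'n^'n \<Rightarrow> real^'n^'n \<Rightarrow> real^'m^'m \<Rightarrow> nat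
   \<Rightarrow> real^'n \<Rightarrow> real^'n \<Rightarrow> (nat \<Rightarrow> real^'m) \<Rightarrow> bool" where
  "mpc_optimal Aq Bq H h P Q R N x r U \<longleftrightarrow> admissible N U \<and>
     (\<forall>V. admissible N V \<longrightarrow> mpc_cost Aq Bq H h P Q R N x r U \<le> mpc_cost Aq Bq H h P Q R N x r V)"

definition qs_mpc_closed_loop ::
  "real^'n^'n \<Rightarrow> real^'m^'n \<Rightarrow> real^'n^'n \<Rightarrow> real \<Rightarrow> real^'n^'n \<Rightarrow> real^'n^'n \<Rightarrow> real^'m^'m \<Rightarrow> nat
   \<Rightarrow> (nat \<Rightarrow> real^'n) \<Rightarrow> (nat \<Rightarrow> real^'n) \<Rightarrow> (nat \<Rightarrow> real^'m) \<Rightarrow> bool" where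
  "qs_mpc_closed_loop Aq Bq H h P Q R N xq xr u \<longleftrightarrow>
     (\<forall>k. xr (Suc k) = mexp (h *\<^sub>R H) *v xr k
        \<and> xq (Suc k) = Aq *v xq k + h *\<^sub>R (Bq *v u k)
        \<and> (\<exists>U. mpc_optimal Aq Bq H h P Q R N (xq k) (xr k) U \<and> u k = U 0))"

end

theory Submission
  imports Defs
begin


lemma adj: "(A *v x) \<bullet> y = x \<bullet> (transpose A *v y)" for A :: "real^'n^'m"
  by (simp add: inner_vec_def matrix_vector_mult_def transpose_def sum_distrib_left
      sum_distrib_right mult_ac) (rule sum.swap)

lemma quad_comp: "wnorm2 P (A *v z) = z \<bullet> ((transpose A ** P ** A) *v z)"
  for A P :: "real^'n^'n"
  by (simp add: wnorm2_def adj matrix_vector_mul_assoc matrix_mul_assoc)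

lemma lyap:
  assumes "neg_def (Q - P + transpose A ** P ** A)"
  shows "wnorm2 P (A *v z) + wnorm2 Q z \<le> wnorm2 P z"
proof -
  have "z \<bullet> ((Q - P + transpose A ** P ** A) *v z) \<le> 0"
    using assms unfolding neg_def_def by (cases "z = 0") (auto simp: less_imp_le)
  then show ?thesis
    using quad_comp[of P A z] by (simp add: wnorm2_def matrix_vector_mult_add_rdistrib
        matrix_vector_mult_diff_rdistrib inner_add_right inner_diff_right)
qed

lemma wn_nonneg: "sym_pos_def P \<Longrightarrow> 0 \<le> wnorm2 P x"
  unfolding sym_pos_def_def wnorm2_def by (cases "x = 0") (auto simp: less_imp_le)

lemma wn_scale: "wnorm2 P (c *\<^sub>R x) = c^2 * wnorm2 P x"
  by (simp add: wnorm2_def matrix_vector_mult_scaleR power2_eq_square)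

lemma wn_lower:
  fixes P :: "real^'n^'n"
  assumes "sym_pos_def P"
  shows "\<exists>c>0. \<forall>x. c * norm x ^ 2 \<le> wnorm2 P x"
proof -
  have cont: "continuous_on (sphere 0 1) (\<lambda>x::real^'n. wnorm2 P x)"
    unfolding wnorm2_def
    by (intro continuous_intros bounded_linear.continuous_on[OF matrix_vector_mul_bounded_linear])
  have ne: "sphere (0::real^'n) 1 \<noteq> {}"
  proof -
    have "axis undefined 1 \<in> sphere (0::real^'n) 1" by simp
    then show ?thesis by blast
  qed
  obtain x0 where x0: "x0 \<in> sphere 0 1" "\<And>y. y \<in> sphere 0 1 \<Longrightarrow> wnorm2 P x0 \<le> wnorm2 P y"
    using continuous_attains_inf[OF compact_sphere ne cont] by blast
  have pos: "wnorm2 P x0 > 0" using x0(1) assms unfolding sym_pos_def_def wnorm2_def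
    by (metis norm_zero mem_sphere_0 zero_neq_one)
  show ?thesis
  proof (intro exI[of _ "wnorm2 P x0"] conjI allI pos)
    fix x :: "real^'n"
    show "wnorm2 P x0 * norm x ^ 2 \<le> wnorm2 P x"
    proof (cases "x = 0")
      case True then show ?thesis by (simp add: wnorm2_def)
    next
      case False
      let ?u = "(1 / norm x) *\<^sub>R x"
      have "?u \<in> sphere 0 1" using False by simp
      then have "wnorm2 P x0 \<le> wnorm2 P ?u" by (rule x0(2))
      also have "\<dots> = wnorm2 P x / norm x ^ 2" by (simp add: wn_scale power_divide)
      finally show ?thesis using False by (simp add: field_simps)
    qed
  qed
qed

lemma wn_upper:
  fixes P :: "real^'n^'n"
  shows "\<exists>C>0. \<forall>x. wnorm2 P x \<le> C * norm x ^ 2"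
proof -
  obtain K where K: "K > 0" "\<And>x. norm (P *v x) \<le> norm x * K"
    using bounded_linear.pos_bounded[OF matrix_vector_mul_bounded_linear[of P]] by blast
  show ?thesis
  proof (intro exI[of _ K] conjI allI K(1))
    fix x :: "real^'n"
    have "wnorm2 P x \<le> norm x * norm (P *v x)" unfolding wnorm2_def
      using norm_cauchy_schwarz by blast
    also have "\<dots> \<le> norm x * (norm x * K)" by (intro mult_left_mono K(2)) simp
    finally show "wnorm2 P x \<le> K * norm x ^ 2" by (simp add: power2_eq_square mult_ac)
  qed
qed



definition ecost where
  "ecost A Bq h P Q R N e U =
     wnorm2 P (xpred A Bq h e U N)
     + (\<Sum>n<N. wnorm2 Q (xpred A Bq h e U n) + wnorm2 R (U n))"

lemma xpred_err: "xpred A Bq h x U n - mpow A n *v r = xpred A Bq h (x - r) U n"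
proof (induction n)
  case 0 then show ?case by simp
next
  case (Suc n)
  have "xpred A Bq h x U (Suc n) - mpow A (Suc n) *v r
      = A *v (xpred A Bq h x U n - mpow A n *v r) + h *\<^sub>R (Bq *v U n)"
    by (simp add: matrix_vector_mult_diff_distrib matrix_vector_mul_assoc[symmetric])
  then show ?case using Suc by simp
qed

lemma cost_eq:
  "mpc_cost (mexp (h *\<^sub>R H)) Bq H h P Q R N x r U = ecost (mexp (h *\<^sub>R H)) Bq h P Q R N (x - r) U"
  unfolding mpc_cost_def ecost_def xrefpred_def xpred_err ..

lemma xpred_cong: "(\<And>i. i < n \<Longrightarrow> U i = V i) \<Longrightarrow> xpred A Bq h x U n = xpred A Bq h x V n"
  by (induction n) auto

lemma xpred_shift: "xpred A Bq h x U (Suc n) = xpred A Bq h (xpred A Bq h x U 1) (\<lambda>i. U (Suc i)) n"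
  by (induction n) auto

lemma ecost_ge:
  assumes "sym_pos_def P" "sym_pos_def Q" "sym_pos_def R" "N \<ge> 1"
  shows "wnorm2 Q e \<le> ecost A Bq h P Q R N e U"
proof -
  obtain M where N: "N = Suc M" using assms(4) by (cases N) auto
  have "0 \<le> (\<Sum>n<M. wnorm2 Q (xpred A Bq h e U (Suc n)) + wnorm2 R (U (Suc n)))"
    by (intro sum_nonneg add_nonneg_nonneg wn_nonneg assms)
  moreover have "0 \<le> wnorm2 P (xpred A Bq h e U N)" "0 \<le> wnorm2 R (U 0)"
    by (intro wn_nonneg assms)+
  ultimately show ?thesis unfolding ecost_def N sum.lessThan_Suc_shift by simp
qed

lemma ecost_zero:
  assumes "neg_def (Q - P + transpose A ** P ** A)"
  shows "ecost A Bq h P Q R N e (\<lambda>_. 0) \<le> wnorm2 P e"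
proof -
  have z: "xpred A Bq h e (\<lambda>_. 0) (Suc n) = A *v xpred A Bq h e (\<lambda>_. 0) n" for n by simp
  have "wnorm2 P (xpred A Bq h e (\<lambda>_. 0) N) + (\<Sum>n<N. wnorm2 Q (xpred A Bq h e (\<lambda>_. 0) n)) \<le> wnorm2 P e"
  proof (induction N)
    case 0 then show ?case by simp
  next
    case (Suc N)
    then show ?case unfolding z sum.lessThan_Suc using lyap[OF assms, of "xpred A Bq h e (\<lambda>_. 0) N"] by linarith
  qed
  then show ?thesis unfolding ecost_def by (simp add: wnorm2_def sum.distrib)
qed

lemma ecost_shift:
  fixes U :: "nat \<Rightarrow> real^'m"
  assumes "neg_def (Q - P + transpose A ** P ** A)" "N \<ge> 1" "sym_pos_def R"
  defines "W \<equiv> (\<lambda>i. if i < N - 1 then U (Suc i) else 0)"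
  shows "ecost A Bq h P Q R N (xpred A Bq h e U 1) W \<le> ecost A Bq h P Q R N e U - wnorm2 Q e"
proof -
  obtain M where N: "N = Suc M" using assms(2) by (cases N) auto
  let ?x = "xpred A Bq h e U"
  let ?y = "xpred A Bq h (?x 1) W"
  have y: "?y n = ?x (Suc n)" if "n \<le> M" for n
  proof -
    have "?y n = xpred A Bq h (?x 1) (\<lambda>i. U (Suc i)) n"
      by (rule xpred_cong) (use that in \<open>auto simp: W_def N\<close>)
    then show ?thesis by (simp only: xpred_shift[symmetric])
  qed
  have yN: "?y N = A *v ?x N"
    using y[of M] by (simp add: N W_def)
  have sQ: "(\<Sum>n<N. wnorm2 Q (?y n)) = (\<Sum>n<M. wnorm2 Q (?x (Suc n))) + wnorm2 Q (?x N)"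
    using y by (simp add: N)
  have sR: "(\<Sum>n<N. wnorm2 R (W n)) = (\<Sum>n<M. wnorm2 R (U (Suc n)))"
    by (simp add: N W_def wnorm2_def)
  have sQ2: "(\<Sum>n<N. wnorm2 Q (?x n)) = wnorm2 Q e + (\<Sum>n<M. wnorm2 Q (?x (Suc n)))"
    unfolding N sum.lessThan_Suc_shift by simp
  have sR2: "(\<Sum>n<N. wnorm2 R (U n)) = wnorm2 R (U 0) + (\<Sum>n<M. wnorm2 R (U (Suc n)))"
    unfolding N sum.lessThan_Suc_shift by simp
  have "0 \<le> wnorm2 R (U 0)" by (rule wn_nonneg[OF assms(3)])
  moreover have "wnorm2 P (A *v ?x N) + wnorm2 Q (?x N) \<le> wnorm2 P (?x N)" by (rule lyap[OF assms(1)])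
  ultimately show ?thesis unfolding ecost_def sum.distrib sQ sR sQ2 sR2 yN by linarith
qed



lemma decay:
  fixes a g :: "nat \<Rightarrow> real"
  assumes "\<And>k. 0 \<le> a k" "\<And>k. 0 \<le> g k" "\<And>k. a (Suc k) + g k \<le> a k"
  shows "g \<longlonglongrightarrow> 0" "a k \<le> a 0"
proof -
  have s: "(\<Sum>j<k. g j) \<le> a 0 - a k" for k
  proof (induction k)
    case 0 then show ?case by simp
  next
    case (Suc k) then show ?case using assms(3)[of k] by simp
  qed
  have "summable g"
  proof (rule summableI_nonneg_bounded)
    show "0 \<le> g n" for n by (rule assms(2))
    show "sum g {..<n} \<le> a 0" for n using s[of n] assms(1)[of n] by linarith
  qed
  then show "g \<longlonglongrightarrow> 0" by (rule summable_LIMSEQ_zero)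
  show "a k \<le> a 0" using s[of k] sum_nonneg[of "{..<k}" g] assms(2) by force
qed

lemma to_zero:
  fixes b :: "nat \<Rightarrow> real^'n"
  assumes "c > 0" "\<And>k. c * norm (b k) ^ 2 \<le> g k" "g \<longlonglongrightarrow> 0"
  shows "b \<longlonglongrightarrow> 0"
proof (rule Lim_null_comparison)
  show "\<forall>\<^sub>F k in sequentially. norm (b k) \<le> sqrt (g k / c)"
  proof (intro always_eventually allI)
    fix k
    have "norm (b k) ^ 2 \<le> g k / c" using assms(1) assms(2)[of k] by (simp add: field_simps)
    then show "norm (b k) \<le> sqrt (g k / c)" by (simp add: real_le_rsqrt)
  qed
  show "(\<lambda>k. sqrt (g k / c)) \<longlonglongrightarrow> 0"
    using tendsto_real_sqrt[OF tendsto_divide_zero[OF assms(3), of c]] by simp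
qed

lemma sqrt_bound:
  fixes a b c D :: real
  assumes "c > 0" "D \<ge> 0" "c * a^2 \<le> D * b^2" "a \<ge> 0" "b \<ge> 0"
  shows "a \<le> sqrt (D / c) * b"
proof -
  have "a^2 \<le> D / c * b^2" using assms by (simp add: field_simps)
  then have "sqrt (a^2) \<le> sqrt (D / c * b^2)" by (rule real_sqrt_le_mono)
  also have "sqrt (D / c * b^2) = sqrt (D / c) * b" using real_sqrt_mult[of "D/c" "b^2"] assms(5) by simp
  finally show ?thesis using assms by simp
qed

lemma cl_facts:
  fixes H A P Q :: "real^'n^'n" and Bq :: "real^'m^'n" and R :: "real^'m^'m"
  assumes N: "N \<ge> 1"
    and sP: "sym_pos_def P" and sQ: "sym_pos_def Q" and sR: "sym_pos_def R"
    and A: "A = mexp (h *\<^sub>R H)"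
    and nd: "neg_def (Q - P + transpose A ** P ** A)"
    and cq: "cq > 0" "\<And>x. cq * norm x ^ 2 \<le> wnorm2 Q x"
    and cp: "cp > 0" "\<And>x. cp * norm x ^ 2 \<le> wnorm2 P x"
    and CP: "CP > 0" "\<And>x. wnorm2 P x \<le> CP * norm x ^ 2"
    and cl: "qs_mpc_closed_loop A Bq H h P Q R N xq xr u"
  shows "xr \<longlonglongrightarrow> 0" "(\<lambda>k. xq k - xr k) \<longlonglongrightarrow> 0"
    "norm (xq k - xr k) \<le> sqrt (CP / cq) * norm (xq 0 - xr 0)"
    "norm (xr k) \<le> sqrt (CP / cp) * norm (xr 0)"
proof -
  have xr: "xr (Suc k) = A *v xr k" for k using cl A unfolding qs_mpc_closed_loop_def by simp
  have "\<forall>k. \<exists>U. mpc_optimal A Bq H h P Q R N (xq k) (xr k) U \<and> u k = U 0"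
    using cl A unfolding qs_mpc_closed_loop_def by simp
  then obtain Uf where Uf: "\<And>k. mpc_optimal A Bq H h P Q R N (xq k) (xr k) (Uf k)" "\<And>k. u k = Uf k 0"
    by metis
  define e where "e k = xq k - xr k" for k
  have e: "e (Suc k) = xpred A Bq h (e k) (Uf k) 1" for k
    using cl A Uf(2)[of k] unfolding qs_mpc_closed_loop_def e_def
    by (simp add: matrix_vector_mult_diff_distrib)
  have ce: "mpc_cost A Bq H h P Q R N x r U = ecost A Bq h P Q R N (x - r) U" for x r U
    using cost_eq[of h H Bq P Q R N x r U] A by simp
  have opt: "ecost A Bq h P Q R N (e k) (Uf k) \<le> ecost A Bq h P Q R N (e k) V"
    if "admissible N V" for k V
    using Uf(1)[of k] that unfolding mpc_optimal_def ce e_def by blast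
  have adm: "admissible N (Uf k)" for k using Uf(1)[of k] unfolding mpc_optimal_def by blast
  define V where "V k = ecost A Bq h P Q R N (e k) (Uf k)" for k
  have Vdec: "V (Suc k) + wnorm2 Q (e k) \<le> V k" for k
  proof -
    let ?W = "\<lambda>i. if i < N - 1 then Uf k (Suc i) else 0"
    have "admissible N ?W" using adm[of k] unfolding admissible_def qinputs_def by auto
    then have "V (Suc k) \<le> ecost A Bq h P Q R N (e (Suc k)) ?W" unfolding V_def by (rule opt)
    also have "\<dots> \<le> V k - wnorm2 Q (e k)" unfolding e V_def
      by (rule ecost_shift[OF nd N sR])
    finally show ?thesis by simp
  qed
  have Vge: "wnorm2 Q (e k) \<le> V k" for k unfolding V_def by (rule ecost_ge[OF sP sQ sR N])
  have V0: "V 0 \<le> wnorm2 P (e 0)"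
  proof -
    have "admissible N (\<lambda>_. 0)" unfolding admissible_def qinputs_def by simp
    then have "V 0 \<le> ecost A Bq h P Q R N (e 0) (\<lambda>_. 0)" unfolding V_def by (rule opt)
    also have "\<dots> \<le> wnorm2 P (e 0)" by (rule ecost_zero[OF nd])
    finally show ?thesis .
  qed
  have Vnn: "0 \<le> V k" for k using Vge[of k] wn_nonneg[OF sQ, of "e k"] by linarith
  note dV = decay[of V "\<lambda>k. wnorm2 Q (e k)", OF Vnn wn_nonneg[OF sQ] Vdec]
  have xrdec: "wnorm2 P (xr (Suc k)) + wnorm2 Q (xr k) \<le> wnorm2 P (xr k)" for k
    unfolding xr by (rule lyap[OF nd])
  note dr = decay[of "\<lambda>k. wnorm2 P (xr k)" "\<lambda>k. wnorm2 Q (xr k)", OF wn_nonneg[OF sP] wn_nonneg[OF sQ] xrdec]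
  show "xr \<longlonglongrightarrow> 0" by (rule to_zero[OF cq(1) cq(2) dr(1)])
  show "(\<lambda>k. xq k - xr k) \<longlonglongrightarrow> 0" using to_zero[OF cq(1) cq(2) dV(1)] unfolding e_def .
  have "cq * norm (e k) ^ 2 \<le> CP * norm (e 0) ^ 2"
    using cq(2)[of "e k"] Vge[of k] dV(2)[of k] V0 CP(2)[of "e 0"] by linarith
  then show "norm (xq k - xr k) \<le> sqrt (CP / cq) * norm (xq 0 - xr 0)"
    unfolding e_def using sqrt_bound cq(1) CP(1) by (simp add: less_imp_le)
  have "cp * norm (xr k) ^ 2 \<le> CP * norm (xr 0) ^ 2"
    using cp(2)[of "xr k"] dr(2)[of k] CP(2)[of "xr 0"] by linarith
  then show "norm (xr k) \<le> sqrt (CP / cp) * norm (xr 0)"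
    using sqrt_bound cp(1) CP(1) by (simp add: less_imp_le)
qed


theorem theorem1:
  fixes H Aq P Q :: "real^'n^'n" and Bq :: "real^'m^'n" and R :: "real^'m^'m"
    and h :: real and N :: nat
  assumes "hurwitz H" and "h > 0" and "N \<ge> 1"
    and "sym_pos_def P" and "sym_pos_def Q" and "sym_pos_def R"
    and "Aq = mexp (h *\<^sub>R H)"
    and "neg_def (Q - P + transpose Aq ** P ** Aq)"
  shows "(\<forall>\<epsilon>>0. \<exists>\<delta>>0. \<forall>xq xr u. qs_mpc_closed_loop Aq Bq H h P Q R N xq xr u \<longrightarrow>
            norm (xq 0) + norm (xr 0) < \<delta> \<longrightarrow> (\<forall>k. norm (xq k) + norm (xr k) < \<epsilon>))
       \<and> (\<forall>xq xr u. qs_mpc_closed_loop Aq Bq H h P Q R N xq xr u \<longrightarrow>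
            xq \<longlonglongrightarrow> 0 \<and> xr \<longlonglongrightarrow> 0 \<and> (\<lambda>k. xq k - xr k) \<longlonglongrightarrow> 0)"
proof -
  obtain cq where cq: "cq > 0" "\<And>x. cq * norm x ^ 2 \<le> wnorm2 Q x"
    using wn_lower[OF assms(5)] by blast
  obtain cp where cp: "cp > 0" "\<And>x. cp * norm x ^ 2 \<le> wnorm2 P x"
    using wn_lower[OF assms(4)] by blast
  obtain CP where CP: "CP > 0" "\<And>x. wnorm2 P x \<le> CP * norm x ^ 2"
    using wn_upper[of P] by blast
  note F = cl_facts[OF assms(3,4,5,6,7,8) cq cp CP]
  define K where "K = sqrt (CP / cq) + 2 * sqrt (CP / cp)"
  have K0: "K \<ge> 0" unfolding K_def using cq(1) cp(1) CP(1) by simp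
  show ?thesis
  proof (intro conjI allI impI)
    fix \<epsilon> :: real assume e: "\<epsilon> > 0"
    show "\<exists>\<delta>>0. \<forall>xq xr u. qs_mpc_closed_loop Aq Bq H h P Q R N xq xr u \<longrightarrow>
            norm (xq 0) + norm (xr 0) < \<delta> \<longrightarrow> (\<forall>k. norm (xq k) + norm (xr k) < \<epsilon>)"
    proof (intro exI[of _ "\<epsilon> / (K + 1)"] conjI allI impI)
      show "\<epsilon> / (K + 1) > 0" using e K0 by simp
      fix xq xr u k
      assume cl: "qs_mpc_closed_loop Aq Bq H h P Q R N xq xr u"
        and s: "norm (xq 0) + norm (xr 0) < \<epsilon> / (K + 1)"
      let ?s = "norm (xq 0) + norm (xr 0)"
      have b1: "norm (xq k - xr k) \<le> sqrt (CP / cq) * norm (xq 0 - xr 0)" by (rule F(3)[OF cl])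
      have b2: "norm (xr k) \<le> sqrt (CP / cp) * norm (xr 0)" by (rule F(4)[OF cl])
      have t1: "norm (xq k) \<le> norm (xq k - xr k) + norm (xr k)"
        using norm_triangle_ineq[of "xq k - xr k" "xr k"] by simp
      have t2: "norm (xq 0 - xr 0) \<le> ?s" by (rule norm_triangle_ineq4)
      have m1: "sqrt (CP / cq) * norm (xq 0 - xr 0) \<le> sqrt (CP / cq) * ?s"
        using cq(1) CP(1) by (intro mult_left_mono t2) simp
      have m2: "sqrt (CP / cp) * norm (xr 0) \<le> sqrt (CP / cp) * ?s"
        using cp(1) CP(1) by (intro mult_left_mono) simp_all
      have "norm (xq k) + norm (xr k) \<le> K * ?s"
        using t1 b1 b2 m1 m2 unfolding K_def by (simp add: algebra_simps)
      also have "\<dots> \<le> (K + 1) * ?s" by (simp add: algebra_simps)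
      also have "\<dots> < \<epsilon>" using s K0 by (simp add: field_simps)
      finally show "norm (xq k) + norm (xr k) < \<epsilon>" .
    qed
  next
    fix xq xr u
    assume cl: "qs_mpc_closed_loop Aq Bq H h P Q R N xq xr u"
    show "xr \<longlonglongrightarrow> 0" by (rule F(1)[OF cl])
    show "(\<lambda>k. xq k - xr k) \<longlonglongrightarrow> 0" by (rule F(2)[OF cl])
    show "xq \<longlonglongrightarrow> 0"
      using tendsto_add[OF F(2)[OF cl] F(1)[OF cl]] by simp
  qed
qed

end
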